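(* Let $T\in\mathcal{L}(\mathcal{H})$ have closed range and let $n\ge1$. If $T^n$ is hypo-EP, then $T$ is $n$-hypo-EP.
   Context: $\mathcal{H}$ is a Hilbert space, $\mathcal{L}(\mathcal{H})$ the bounded operators on it; $R(\cdot)$ denotes range. An operator $A$ is hypo-EP if $A$ has closed range and $R(A)\subset R(A^* )$ (equivalently $A^\dagger A-AA^\dagger\ge0$, with $A^\dagger$ the Moore–Penrose inverse). For $n\ge1$, $T$ is $n$-hypo-EP if $T$ has closed range and $R(T^n)\subset R(T^* )$. *)

theory Defs
  imports "HOL-Analysis.Analysis"
begin

text \<open>Bounded operators on a (real) Hilbert space 'a :: {real_inner, complete_space}
  are modelled as functions T with bounded_linear T; the Hilbert adjoint is the
  library's adjoint (characterised by (T x) \<bullet> y = x \<bullet> (adjoint T y)).\<close>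

definition hypo_EP :: "('a::{real_inner,complete_space} \<Rightarrow> 'a) \<Rightarrow> bool" where
  "hypo_EP A \<longleftrightarrow> closed (range A) \<and> range A \<subseteq> range (adjoint A)"

definition n_hypo_EP :: "nat \<Rightarrow> ('a::{real_inner,complete_space} \<Rightarrow> 'a) \<Rightarrow> bool" where
  "n_hypo_EP n T \<longleftrightarrow> closed (range T) \<and> range (T ^^ n) \<subseteq> range (adjoint T)"

end

theory Submission
  imports Defs
begin

lemma parallelogram_le:
  fixes a b :: "'a::real_inner"
  shows "(norm (a - b))\<^sup>2 = 2 * (norm a)\<^sup>2 + 2 * (norm b)\<^sup>2 - (norm (a + b))\<^sup>2"
  by (simp add: power2_norm_eq_inner inner_diff inner_add inner_commute algebra_simps)

lemma min_norm_exists: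
  fixes S :: "'a::{real_inner,complete_space} set"
  assumes cl: "closed S" and cv: "convex S" and ne: "S \<noteq> {}"
  shows "\<exists>z\<in>S. \<forall>x\<in>S. norm z \<le> norm x"
proof -
  define d where "d = Inf (norm ` S)"
  have bdd: "bdd_below (norm ` S)" by (rule bdd_belowI[of _ 0]) auto
  have dle: "d \<le> norm x" if "x \<in> S" for x
    unfolding d_def by (rule cInf_lower) (use that bdd in auto)
  have d0: "0 \<le> d" unfolding d_def using ne by (intro cInf_greatest) auto
  have "\<exists>x\<in>S. norm x < d + 1 / real (Suc k)" for k
  proof -
    have "Inf (norm ` S) < d + 1 / real (Suc k)" unfolding d_def by simp
    then show ?thesis using ne bdd by (subst (asm) cInf_less_iff) auto
  qed
  then obtain X where XS: "\<And>k. X k \<in> S" and Xn: "\<And>k. norm (X k) < d + 1 / real (Suc k)"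
    by metis
  have key: "norm (X m - X n) ^ 2 \<le> 4 * (1 / real (Suc N)) * (2 * d + 1)"
    if "m \<ge> N" "n \<ge> N" for m n N
  proof -
    define e where "e = 1 / real (Suc N)"
    have e0: "0 < e" "e \<le> 1" unfolding e_def by (auto simp: field_simps)
    have "1 / real (Suc m) \<le> e" "1 / real (Suc n) \<le> e" unfolding e_def using that
      by (auto simp: field_simps)
    hence nm: "norm (X m) \<le> d + e" "norm (X n) \<le> d + e" using Xn[of m] Xn[of n] by auto
    have mid: "(1/2) *\<^sub>R X m + (1/2) *\<^sub>R X n \<in> S"
      by (rule convexD[OF cv XS XS]) auto
    have "(1/2) *\<^sub>R X m + (1/2) *\<^sub>R X n = (1/2) *\<^sub>R (X m + X n)" by (simp add: scaleR_add_right)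
    hence "d \<le> norm ((1/2) *\<^sub>R (X m + X n))" using dle[OF mid] by simp
    hence "2 * d \<le> norm (X m + X n)" by simp
    hence s: "(2*d)^2 \<le> (norm (X m + X n))^2" using d0 by (intro power_mono) auto
    have a: "(norm (X m))^2 \<le> (d+e)^2" "(norm (X n))^2 \<le> (d+e)^2"
      using nm by (auto intro: power_mono)
    have "norm (X m - X n) ^ 2 \<le> 2*(d+e)^2 + 2*(d+e)^2 - (2*d)^2"
      using parallelogram_le[of "X m" "X n"] a s by linarith
    also have "\<dots> = 4 * e * (2*d + e)" by (simp add: power2_eq_square algebra_simps)
    also have "\<dots> \<le> 4 * e * (2*d+1)" using e0 by (intro mult_left_mono) auto
    finally show ?thesis unfolding e_def .
  qed
  have "Cauchy X"
  proof (rule CauchyI)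
    fix \<epsilon> :: real assume ep: "0 < \<epsilon>"
    define \<delta> where "\<delta> = \<epsilon>^2 / (8 * (2*d+1))"
    have dp: "\<delta> > 0" unfolding \<delta>_def using ep d0 by auto
    obtain N where N: "1 / real (Suc N) < \<delta>"
      using dp by (metis nat_approx_posE)
    have "norm (X m - X n) < \<epsilon>" if "m \<ge> N" "n \<ge> N" for m n
    proof -
      have "norm (X m - X n) ^ 2 \<le> 4 * (1 / real (Suc N)) * (2 * d + 1)" by (rule key[OF that])
      also have "\<dots> \<le> 4 * \<delta> * (2*d+1)" using N d0 by (intro mult_right_mono) auto
      also have "\<dots> < \<epsilon>^2"
      proof -
        have "0 < \<epsilon>^2" using ep by simp
        moreover have "0 \<le> d * \<epsilon>^2" using d0 by simp
        have "2*d+1 \<noteq> 0" using d0 by simp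
        hence "4*\<delta>*(2*d+1) = \<epsilon>^2/2" unfolding \<delta>_def by (simp add: field_simps)
        ultimately show ?thesis by linarith
      qed
      finally have "norm (X m - X n) ^ 2 < \<epsilon>^2" .
      thus ?thesis using ep by (simp add: power_less_imp_less_base)
    qed
    thus "\<exists>M. \<forall>m\<ge>M. \<forall>n\<ge>M. norm (X m - X n) < \<epsilon>" by blast
  qed
  then obtain z where z: "X \<longlonglongrightarrow> z" using convergent_eq_Cauchy convergent_def by blast
  have zS: "z \<in> S" using cl XS z closed_sequentially by blast
  have "(\<lambda>k. norm (X k)) \<longlonglongrightarrow> norm z" using z by (rule tendsto_norm)
  moreover have "(\<lambda>k. d + 1 / real (Suc k)) \<longlonglongrightarrow> d + 0"
    by (intro tendsto_add tendsto_const LIMSEQ_Suc[OF lim_inverse_n'[unfolded inverse_eq_divide]]) 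
  ultimately have "norm z \<le> d + 0" using Xn by (intro LIMSEQ_le) (auto intro: less_imp_le)
  thus ?thesis using zS dle by force
qed


lemma riesz:
  fixes f :: "'a::{real_inner,complete_space} \<Rightarrow> real"
  assumes bl: "bounded_linear f"
  shows "\<exists>w. \<forall>x. f x = x \<bullet> w"
proof (cases "\<forall>x. f x = 0")
  case True thus ?thesis by (intro exI[of _ 0]) simp
next
  case False
  interpret f: bounded_linear f by fact
  obtain u where u: "f u \<noteq> 0" using False by blast
  define S where "S = {x. f x = 1}"
  have c1: "closed S" unfolding S_def
    by (intro closed_Collect_eq f.continuous_on continuous_on_const continuous_on_id)
  have c2: "convex S" unfolding S_def convex_def
    by (simp add: f.add f.scale)
  have c3: "(1 / f u) *\<^sub>R u \<in> S" unfolding S_def using u by (simp add: f.scale)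
  hence "S \<noteq> {}" by blast
  from min_norm_exists[OF c1 c2 this] obtain z where zS: "z \<in> S" and zmin: "\<And>x. x \<in> S \<Longrightarrow> norm z \<le> norm x"
    by blast
  have fz: "f z = 1" using zS S_def by simp
  have orth: "z \<bullet> x = 0" if "f x = 0" for x
  proof (rule ccontr)
    assume nz: "z \<bullet> x \<noteq> 0"
    hence x0: "x \<noteq> 0" by auto
    define t where "t = - (z \<bullet> x) / (x \<bullet> x)"
    have "z + t *\<^sub>R x \<in> S" unfolding S_def using fz that by (simp add: f.add f.scale)
    hence "norm z \<le> norm (z + t *\<^sub>R x)" by (rule zmin)
    hence "(norm z)^2 \<le> (norm (z + t *\<^sub>R x))^2" by (intro power_mono) auto
    hence "z \<bullet> z \<le> (z + t *\<^sub>R x) \<bullet> (z + t *\<^sub>R x)" by (simp add: power2_norm_eq_inner)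
    also have "\<dots> = z \<bullet> z + 2 * t * (z \<bullet> x) + t * t * (x \<bullet> x)"
      by (simp add: inner_add inner_commute algebra_simps)
    also have "\<dots> = z \<bullet> z - (z \<bullet> x) * (z \<bullet> x) / (x \<bullet> x)"
    proof -
      have b: "x \<bullet> x \<noteq> 0" using x0 by simp
      have tb: "t * (x \<bullet> x) = - (z \<bullet> x)" unfolding t_def using b by simp
      have "2 * t * (z \<bullet> x) + t * t * (x \<bullet> x) = 2 * t * (z \<bullet> x) + t * (t * (x \<bullet> x))"
        by (simp only: mult.assoc)
      also have "\<dots> = t * (z \<bullet> x)" unfolding tb by simp
      also have "\<dots> = - (z \<bullet> x) * (z \<bullet> x) / (x \<bullet> x)" unfolding t_def by simp
      finally show ?thesis by simp
    qed
    finally have "(z \<bullet> x) * (z \<bullet> x) / (x \<bullet> x) \<le> 0" by simp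
    moreover have "(z \<bullet> x) * (z \<bullet> x) / (x \<bullet> x) > 0"
      using nz x0 by (intro divide_pos_pos) (auto simp: zero_less_mult_iff linorder_neq_iff)
    ultimately show False by simp
  qed
  have "z \<noteq> 0" using fz f.zero by auto
  hence z0: "z \<bullet> z \<noteq> 0" by simp
  show ?thesis
  proof (intro exI allI)
    fix x
    have "f (x - f x *\<^sub>R z) = 0" using fz by (simp add: f.diff f.scale)
    hence "z \<bullet> (x - f x *\<^sub>R z) = 0" by (rule orth)
    hence "z \<bullet> x = f x * (z \<bullet> z)" by (simp add: inner_diff)
    thus "f x = x \<bullet> ((1 / (z \<bullet> z)) *\<^sub>R z)" using z0 by (simp add: inner_commute field_simps)
  qed
qed

lemma adjoint_prop:
  fixes T :: "'a::{real_inner,complete_space} \<Rightarrow> 'a"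
  assumes "bounded_linear T"
  shows "\<forall>x y. T x \<bullet> y = x \<bullet> adjoint T y"
proof -
  have "\<forall>y. \<exists>w. \<forall>x. T x \<bullet> y = x \<bullet> w"
  proof
    fix y
    have "bounded_linear (\<lambda>x. T x \<bullet> y)"
      using bounded_linear_compose[OF bounded_linear_inner_left assms] by simp
    thus "\<exists>w. \<forall>x. T x \<bullet> y = x \<bullet> w" by (rule riesz)
  qed
  then obtain g where "\<forall>y x. T x \<bullet> y = x \<bullet> g y" by metis
  hence "\<exists>g. \<forall>x y. T x \<bullet> y = x \<bullet> g y" by blast
  thus ?thesis unfolding adjoint_def by (rule someI_ex)
qed

lemma adjoint_funpow:
  fixes T :: "'a::{real_inner,complete_space} \<Rightarrow> 'a"
  assumes "bounded_linear T"
  shows "adjoint (T ^^ n) = adjoint T ^^ n"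
proof (rule adjoint_unique)
  have "(T ^^ n) x \<bullet> y = x \<bullet> (adjoint T ^^ n) y" for x y
  proof (induction n arbitrary: x)
    case 0 thus ?case by simp
  next
    case (Suc n)
    have "(T ^^ Suc n) x \<bullet> y = (T ^^ n) (T x) \<bullet> y" by (simp only: funpow_Suc_right comp_def)
    also have "\<dots> = T x \<bullet> (adjoint T ^^ n) y" by (rule Suc.IH)
    also have "\<dots> = x \<bullet> adjoint T ((adjoint T ^^ n) y)" using adjoint_prop[OF assms] by blast
    finally show ?case by simp
  qed
  thus "\<forall>x y. (T ^^ n) x \<bullet> y = x \<bullet> (adjoint T ^^ n) y" by blast
qed

theorem mainTheorem14:
  fixes T :: "'a::{real_inner,complete_space} \<Rightarrow> 'a" and n :: nat
  assumes "bounded_linear T"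
    and "closed (range T)"
    and "n \<ge> 1"
    and "hypo_EP (T ^^ n)"
  shows "n_hypo_EP n T"
proof -
  have "range (T ^^ n) \<subseteq> range (adjoint (T ^^ n))" using assms(4) unfolding hypo_EP_def by blast
  also have "\<dots> = range (adjoint T ^^ n)" using adjoint_funpow[OF assms(1)] by simp
  also have "\<dots> \<subseteq> range (adjoint T)"
  proof -
    obtain m where "n = Suc m" using assms(3) by (cases n) auto
    moreover have "(adjoint T ^^ Suc m) y = adjoint T ((adjoint T ^^ m) y)" for y by simp
    ultimately show ?thesis by (metis image_subset_iff rangeI)
  qed
  finally show ?thesis unfolding n_hypo_EP_def using assms(2) by blast
qed

end
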